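(* Let $p\ge 3$ be a prime, $m,k\ge1$ integers, and $t,u\in\mathbb{Z}_p$ with $u\neq0$ and $t^2\equiv u\pmod p$. Let $G$ be the set of all $m\times k$ matrices over $\mathbb{Z}_p$ with the operation $[a_{ij}]*[b_{ij}]=[(t a_{ij}+u b_{ij})\bmod p]$. Then $(G,* )$ is a cancellative AG-groupoid.
   Context: An AG-groupoid is a set with a binary operation satisfying $(a*b)*c=(c*b)*a$ for all $a,b,c$. An element $a$ of an AG-groupoid $G$ is left cancellative if $a*x=a*y$ implies $x=y$, and right cancellative if $x*a=y*a$ implies $x=y$; $G$ is cancellative if every element is both left and right cancellative. *)

theory Defs
  imports "HOL-Number_Theory.Number_Theory"
begin

definition ag_groupoid :: "'a set \<Rightarrow> ('a \<Rightarrow> 'a \<Rightarrow> 'a) \<Rightarrow> bool" where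
  "ag_groupoid G f \<longleftrightarrow> (\<forall>a\<in>G. \<forall>b\<in>G. f a b \<in> G) \<and>
     (\<forall>a\<in>G. \<forall>b\<in>G. \<forall>c\<in>G. f (f a b) c = f (f c b) a)"

definition left_cancellative :: "'a set \<Rightarrow> ('a \<Rightarrow> 'a \<Rightarrow> 'a) \<Rightarrow> 'a \<Rightarrow> bool" where
  "left_cancellative G f a \<longleftrightarrow> (\<forall>x\<in>G. \<forall>y\<in>G. f a x = f a y \<longrightarrow> x = y)"

definition right_cancellative :: "'a set \<Rightarrow> ('a \<Rightarrow> 'a \<Rightarrow> 'a) \<Rightarrow> 'a \<Rightarrow> bool" where
  "right_cancellative G f a \<longleftrightarrow> (\<forall>x\<in>G. \<forall>y\<in>G. f x a = f y a \<longrightarrow> x = y)"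

definition cancellative :: "'a set \<Rightarrow> ('a \<Rightarrow> 'a \<Rightarrow> 'a) \<Rightarrow> bool" where
  "cancellative G f \<longleftrightarrow> (\<forall>a\<in>G. left_cancellative G f a \<and> right_cancellative G f a)"

definition zp_matrices :: "int \<Rightarrow> nat \<Rightarrow> nat \<Rightarrow> (nat \<Rightarrow> nat \<Rightarrow> int) set" where
  "zp_matrices p m k = {A. (\<forall>i j. (i < m \<and> j < k \<longrightarrow> A i j \<in> {0..p-1}) \<and>
                                  (\<not>(i < m \<and> j < k) \<longrightarrow> A i j = 0))}"

definition zp_op :: "int \<Rightarrow> int \<Rightarrow> int \<Rightarrow> nat \<Rightarrow> nat \<Rightarrow>
    (nat \<Rightarrow> nat \<Rightarrow> int) \<Rightarrow> (nat \<Rightarrow> nat \<Rightarrow> int) \<Rightarrow> (nat \<Rightarrow> nat \<Rightarrow> int)" where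
  "zp_op p t u m k A B = (\<lambda>i j. if i < m \<and> j < k then (t * A i j + u * B i j) mod p else 0)"

end

theory Submission
  imports Defs
begin

lemma canc_entry:
  fixes p c x y a :: int
  assumes "prime p" "\<not> p dvd c" "x \<in> {0..p-1}" "y \<in> {0..p-1}"
    and "(a + c*x) mod p = (a + c*y) mod p"
  shows "x = y"
proof -
  have "p dvd (a + c*x) - (a + c*y)" using assms(5) mod_eq_dvd_iff by blast
  hence "p dvd c * (x - y)" by (simp add: algebra_simps)
  hence d: "p dvd (x - y)" using assms(1,2) prime_dvd_mult_iff by blast
  have "\<bar>x - y\<bar> < p" using assms(3,4) by auto
  show ?thesis
  proof (rule ccontr)
    assume "x \<noteq> y"
    hence "x - y \<noteq> 0" by simp
    from dvd_imp_le_int[OF this d] have "\<bar>p\<bar> \<le> \<bar>x - y\<bar>" .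
    thus False using \<open>\<bar>x - y\<bar> < p\<close> by simp
  qed
qed

theorem mainTheorem7:
  fixes p t u :: int and m k :: nat
  assumes "prime p" and "p \<ge> 3" and "m \<ge> 1" and "k \<ge> 1"
    and "t \<in> {0..p-1}" and "u \<in> {0..p-1}" and "u \<noteq> 0"
    and "[t^2 = u] (mod p)"
  shows "ag_groupoid (zp_matrices p m k) (zp_op p t u m k) \<and>
         cancellative (zp_matrices p m k) (zp_op p t u m k)"
proof -
  have pp: "p > 0" using assms(2) by simp
  have nu: "\<not> p dvd u"
  proof
    assume "p dvd u"
    moreover have "0 < u" "u < p" using assms(6,7) by auto
    ultimately show False using zdvd_not_zless by blast
  qed
  have nt: "\<not> p dvd t"
  proof
    assume "p dvd t"
    hence "p dvd t^2" by (simp add: power2_eq_square)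
    hence "p dvd u" using cong_dvd_iff[OF assms(8)] by simp
    thus False using nu by simp
  qed
  have tu: "t^2 mod p = u mod p" using assms(8) unfolding cong_def .
  let ?G = "zp_matrices p m k" and ?f = "zp_op p t u m k"
  have closed: "\<forall>a\<in>?G. \<forall>b\<in>?G. ?f a b \<in> ?G"
    using pp by (auto simp: zp_matrices_def zp_op_def)
  have law: "?f (?f a b) c = ?f (?f c b) a" for a b c
  proof -
    have "(t * ((t * a i j + u * b i j) mod p) + u * c i j) mod p =
          (t * ((t * c i j + u * b i j) mod p) + u * a i j) mod p" for i j
    proof -
      have c1: "[t * ((t * a i j + u * b i j) mod p) + u * c i j = t^2 * a i j + t*u*b i j + u * c i j] (mod p)"
      proof -
        have "[t * ((t * a i j + u * b i j) mod p) + u * c i j = t * (t * a i j + u * b i j) + u * c i j] (mod p)"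
          by (intro cong_add cong_refl cong_scalar_left) (simp add: cong_def)
        moreover have "t * (t * a i j + u * b i j) + u * c i j = t^2 * a i j + t*u*b i j + u * c i j"
          by (simp add: power2_eq_square algebra_simps)
        ultimately show ?thesis by simp
      qed
      have c2: "[t * ((t * c i j + u * b i j) mod p) + u * a i j = t^2 * c i j + t*u*b i j + u * a i j] (mod p)"
      proof -
        have "[t * ((t * c i j + u * b i j) mod p) + u * a i j = t * (t * c i j + u * b i j) + u * a i j] (mod p)"
          by (intro cong_add cong_refl cong_scalar_left) (simp add: cong_def)
        moreover have "t * (t * c i j + u * b i j) + u * a i j = t^2 * c i j + t*u*b i j + u * a i j"
          by (simp add: power2_eq_square algebra_simps)
        ultimately show ?thesis by simp
      qed
      have c3: "[t^2 * a i j + t*u*b i j + u * c i j = u * a i j + t*u*b i j + u * c i j] (mod p)"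
        by (intro cong_add cong_mult cong_refl assms(8))
      have c4: "[t^2 * c i j + t*u*b i j + u * a i j = u * c i j + t*u*b i j + u * a i j] (mod p)"
        by (intro cong_add cong_mult cong_refl assms(8))
      have "[t * ((t * a i j + u * b i j) mod p) + u * c i j = t * ((t * c i j + u * b i j) mod p) + u * a i j] (mod p)"
      proof -
        have e: "u * a i j + t*u*b i j + u * c i j = u * c i j + t*u*b i j + u * a i j" by simp
        show ?thesis using cong_trans[OF cong_trans[OF c1 c3[unfolded e]] cong_sym[OF cong_trans[OF c2 c4]]] by simp
      qed
      thus ?thesis unfolding cong_def .
    qed
    thus ?thesis by (auto simp: zp_op_def fun_eq_iff)
  qed
  have lc: "left_cancellative ?G ?f a" if "a \<in> ?G" for a
    unfolding left_cancellative_def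
  proof (intro ballI impI)
    fix x y assume x: "x \<in> ?G" and y: "y \<in> ?G" and e: "?f a x = ?f a y"
    show "x = y"
    proof (rule ext, rule ext)
      fix i j
      show "x i j = y i j"
      proof (cases "i < m \<and> j < k")
        case True
        have "(t * a i j + u * x i j) mod p = (t * a i j + u * y i j) mod p"
          using fun_cong[OF fun_cong[OF e, of i], of j] True by (simp add: zp_op_def)
        moreover have "x i j \<in> {0..p-1}" "y i j \<in> {0..p-1}"
          using x y True by (auto simp: zp_matrices_def)
        ultimately show ?thesis using canc_entry[OF assms(1) nu] by blast
      next
        case False thus ?thesis using x y by (auto simp: zp_matrices_def)
      qed
    qed
  qed
  have rc: "right_cancellative ?G ?f a" if "a \<in> ?G" for a
    unfolding right_cancellative_def
  proof (intro ballI impI)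
    fix x y assume x: "x \<in> ?G" and y: "y \<in> ?G" and e: "?f x a = ?f y a"
    show "x = y"
    proof (rule ext, rule ext)
      fix i j
      show "x i j = y i j"
      proof (cases "i < m \<and> j < k")
        case True
        have "(t * x i j + u * a i j) mod p = (t * y i j + u * a i j) mod p"
          using fun_cong[OF fun_cong[OF e, of i], of j] True by (simp add: zp_op_def)
        hence "(u * a i j + t * x i j) mod p = (u * a i j + t * y i j) mod p"
          by (simp add: add.commute)
        moreover have "x i j \<in> {0..p-1}" "y i j \<in> {0..p-1}"
          using x y True by (auto simp: zp_matrices_def)
        ultimately show ?thesis using canc_entry[OF assms(1) nt] by blast
      next
        case False thus ?thesis using x y by (auto simp: zp_matrices_def)
      qed
    qed
  qed
  have ag: "ag_groupoid ?G ?f"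
    unfolding ag_groupoid_def
  proof (intro conjI)
    show "\<forall>a\<in>?G. \<forall>b\<in>?G. ?f a b \<in> ?G" by (rule closed)
    show "\<forall>a\<in>?G. \<forall>b\<in>?G. \<forall>c\<in>?G. ?f (?f a b) c = ?f (?f c b) a"
      by (intro ballI, rule law)
  qed
  have ca: "cancellative ?G ?f"
    unfolding cancellative_def
  proof
    fix a assume "a \<in> ?G"
    thus "left_cancellative ?G ?f a \<and> right_cancellative ?G ?f a"
      using lc rc by (intro conjI)
  qed
  show ?thesis using ag ca by (rule conjI)
qed

end
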